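(* Let $Y\in[M]=\{1,\dots,M\}$, $R\in\{0,1\}$, and $F$ taking values in a finite set $\mathcal F$, with $\mathbb{P}(F=f,R=1)>0$ for all $f\in\mathcal F$. Define $B\in\mathbb{R}^{|\mathcal F|\times M}$ by $B_{fy}=\mathbb{P}(Y=y\mid F=f,R=1)$ and $H\in\mathbb{R}^{|\mathcal F|\times M}$ by $H_{fy}=\mathbb{P}(F=f,Y=y)$. Say that completeness holds if for every function $h:[M]\to\mathbb{R}$, $\mathbb{E}[h(Y)\mid F=f,R=1]=0$ for all $f\in\mathcal F$ implies $h(y)=0$ for all $y\in[M]$. Then: (i) completeness holds if and only if $\operatorname{rank}(B)=M$. (ii) Suppose in addition that $F$ is conditionally independent of $R$ given $Y$, that $\pi(y):=\mathbb{P}(R=1\mid Y=y)\in[\underline\pi,\overline\pi]$ for all $y$, and that $\mathbb{P}(F=f,R=1)\in[\underline p_F,\overline p_F]$ for all $f$, where $\underline\pi>0$ and $\underline p_F>0$. Then completeness holds if and only if $\operatorname{rank}(H)=M$, and in that case \[\kappa(B)\le \frac{\overline p_F}{\underline p_F}\cdot\frac{\overline\pi}{\underline\pi}\cdot\kappa(H),\] where for a matrix $G$ with full column rank, $\kappa(G)=\sigma_{\max}(G)/\sigma_{\min}(G)$ is the ratio of its largest to its smallest singular value.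
   Context: Here $F$ plays the role of an always-observed auxiliary prediction of the outcome $Y$ (a shadow variable), and the covariate $X$ is suppressed (equivalently, everything is conditional on a fixed value of $X$). *)

theory Defs
  imports "HOL-Analysis.Analysis" "HOL-Probability.Probability"
begin

text \<open>Joint law of (F, Y, R) is a pmf P on 'f \<times> 'y \<times> bool, with 'f the finite
  set of values of F, 'y the outcome set [M] (M = CARD('y)) and R = 1 encoded as True.\<close>

definition pFR :: "('f \<times> 'y \<times> bool) pmf \<Rightarrow> 'f \<Rightarrow> real" where
  "pFR P f = measure_pmf.prob P {(f', y', r'). f' = f \<and> r'}"

definition pFYR :: "('f \<times> 'y \<times> bool) pmf \<Rightarrow> 'f \<Rightarrow> 'y \<Rightarrow> bool \<Rightarrow> real" where
  "pFYR P f y r = measure_pmf.prob P {(f, y, r)}"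

definition pFY :: "('f \<times> 'y \<times> bool) pmf \<Rightarrow> 'f \<Rightarrow> 'y \<Rightarrow> real" where
  "pFY P f y = measure_pmf.prob P {(f', y', r'). f' = f \<and> y' = y}"

definition pY :: "('f \<times> 'y \<times> bool) pmf \<Rightarrow> 'y \<Rightarrow> real" where
  "pY P y = measure_pmf.prob P {(f', y', r'). y' = y}"

definition pYR :: "('f \<times> 'y \<times> bool) pmf \<Rightarrow> 'y \<Rightarrow> bool \<Rightarrow> real" where
  "pYR P y r = measure_pmf.prob P {(f', y', r'). y' = y \<and> r' = r}"

text \<open>pi(y) = P(R = 1 | Y = y)\<close>
definition piR :: "('f \<times> 'y \<times> bool) pmf \<Rightarrow> 'y \<Rightarrow> real" where
  "piR P y = pYR P y True / pY P y"

text \<open>B_{fy} = P(Y = y | F = f, R = 1)\<close>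
definition Bmat :: "('f::finite \<times> 'y::finite \<times> bool) pmf \<Rightarrow> real^'y^'f" where
  "Bmat P = (\<chi> f y. pFYR P f y True / pFR P f)"

text \<open>H_{fy} = P(F = f, Y = y)\<close>
definition Hmat :: "('f::finite \<times> 'y::finite \<times> bool) pmf \<Rightarrow> real^'y^'f" where
  "Hmat P = (\<chi> f y. pFY P f y)"

text \<open>E[h(Y) | F = f, R = 1]\<close>
definition cond_exp_hY :: "('f \<times> 'y::finite \<times> bool) pmf \<Rightarrow> ('y \<Rightarrow> real) \<Rightarrow> 'f \<Rightarrow> real" where
  "cond_exp_hY P h f = (\<Sum>y\<in>UNIV. h y * (pFYR P f y True / pFR P f))"

definition completeness :: "('f \<times> 'y::finite \<times> bool) pmf \<Rightarrow> bool" where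
  "completeness P \<longleftrightarrow>
     (\<forall>h :: 'y \<Rightarrow> real. (\<forall>f. cond_exp_hY P h f = 0) \<longrightarrow> (\<forall>y. h y = 0))"

text \<open>F conditionally independent of R given Y (discrete):
  P(F=f,Y=y,R=r) P(Y=y) = P(F=f,Y=y) P(Y=y,R=r).\<close>
definition cond_indep_FR_given_Y :: "('f \<times> 'y \<times> bool) pmf \<Rightarrow> bool" where
  "cond_indep_FR_given_Y P \<longleftrightarrow>
     (\<forall>f y r. pFYR P f y r * pY P y = pFY P f y * pYR P y r)"

text \<open>Singular values of G: square roots of the eigenvalues of G^T G.\<close>
definition eigenvalues_of :: "real^'n^'n \<Rightarrow> real set" where
  "eigenvalues_of A = {l. \<exists>v. v \<noteq> 0 \<and> A *v v = l *\<^sub>R v}"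

definition singular_values :: "real^'n^'m \<Rightarrow> real set" where
  "singular_values G = sqrt ` eigenvalues_of (transpose G ** G)"

definition sigma_max :: "real^'n^'m \<Rightarrow> real" where
  "sigma_max G = Max (singular_values G)"

definition sigma_min :: "real^'n^'m \<Rightarrow> real" where
  "sigma_min G = Min (singular_values G)"

definition cond_number :: "real^'n^'m \<Rightarrow> real" where
  "cond_number G = sigma_max G / sigma_min G"

end

theory Submission
  imports Defs
begin


lemma key_id:
  fixes G :: "real^'n^'m"
  shows "x \<bullet> ((transpose G ** G) *v y) = (G *v x) \<bullet> (G *v y)"
  by (metis dot_lmul_matrix matrix_vector_mul_assoc vector_transpose_matrix)

lemma psd_zero:
  fixes u v :: "real^'n" and bf :: "real^'n \<Rightarrow> real^'n \<Rightarrow> real"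
  assumes nn: "\<And>x. bf x x \<ge> 0" and z: "bf v v = 0"
    and ex: "\<And>w t. bf (v + t *\<^sub>R w) (v + t *\<^sub>R w) = bf v v + 2*t*bf w v + t^2 * bf w w"
    and rep: "\<And>w. bf w v = w \<bullet> u"
  shows "u = 0"
proof -
  have c0: "bf w v = 0" for w
  proof (rule ccontr)
    assume ne: "bf w v \<noteq> 0"
    define c where "c = bf w v"
    define d where "d = bf w w"
    have d0: "d \<ge> 0" using nn d_def by simp
    define t where "t = - c / (d + 1)"
    have "0 \<le> bf (v + t *\<^sub>R w) (v + t *\<^sub>R w)" by (rule nn)
    also have "\<dots> = 2*t*c + t^2*d" using ex z c_def d_def by simp
    finally have h: "0 \<le> 2*t*c + t^2*d" .
    have dp: "d + 1 > 0" using d0 by simp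
    have "2*t*c + t^2*d = - (c^2 * (d + 2)) / (d+1)^2"
    proof -
      have "d + 1 \<noteq> 0" using dp by simp
      then show ?thesis unfolding t_def by (simp add: power2_eq_square divide_simps) (simp add: algebra_simps)
    qed
    moreover have "c^2 * (d + 2) > 0" using ne d0 c_def by simp
    ultimately have "2*t*c + t^2*d < 0" using dp by (simp add: divide_neg_pos)
    then show False using h by simp
  qed
  have "u \<bullet> u = 0" using c0[of u] rep[of u] by simp
  then show ?thesis by simp
qed

lemma exp_lemma:
  fixes G :: "real^'n^'m" and v w :: "real^'n" and t :: real
  shows "(G *v (v + t *\<^sub>R w)) \<bullet> (G *v (v + t *\<^sub>R w)) = (G *v v) \<bullet> (G *v v) + 2*t*((G *v w) \<bullet> (G *v v)) + t^2 * ((G *v w) \<bullet> (G *v w))"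
    and "(v + t *\<^sub>R w) \<bullet> (v + t *\<^sub>R w) = v \<bullet> v + 2*t*(w \<bullet> v) + t^2 * (w \<bullet> w)"
  by (simp_all add: matrix_vector_right_distrib matrix_vector_mult_scaleR inner_add_left inner_add_right
      inner_commute power2_eq_square algebra_simps)

lemma Q_scale:
  fixes G :: "real^'n^'m"
  shows "(G *v (c *\<^sub>R x)) \<bullet> (G *v (c *\<^sub>R x)) = c^2 * ((G *v x) \<bullet> (G *v x))"
  by (simp add: matrix_vector_mult_scaleR power2_eq_square)

lemma ray_ext:
  fixes G :: "real^'n^'m"
  shows "\<exists>v. v \<bullet> v = 1 \<and> (\<forall>x. (G *v x) \<bullet> (G *v x) \<le> ((G *v v) \<bullet> (G *v v)) * (x \<bullet> x))"
    and "\<exists>v. v \<bullet> v = 1 \<and> (\<forall>x. ((G *v v) \<bullet> (G *v v)) * (x \<bullet> x) \<le> (G *v x) \<bullet> (G *v x))"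
proof -
  define Q where "Q x = (G *v x) \<bullet> (G *v x)" for x
  have cont: "continuous_on (sphere (0::real^'n) 1) Q"
    unfolding Q_def by (intro continuous_intros linear_continuous_on matrix_vector_mul_linear bounded_linear_inner_left)
  have ne: "sphere (0::real^'n) 1 \<noteq> {}"
  proof -
    obtain i :: 'n where True by simp
    have "axis i (1::real) \<in> sphere 0 1" by (simp add: norm_axis_1)
    then show ?thesis by blast
  qed
  have ext: "Q x \<le> Q v * (x \<bullet> x)" if vs: "v \<in> sphere 0 1" and mx: "\<forall>y\<in>sphere 0 1. Q y \<le> Q v" for v x
  proof (cases "x = 0")
    case True then show ?thesis by (simp add: Q_def)
  next
    case False
    have "(1 / norm x) *\<^sub>R x \<in> sphere 0 1" using False by simp
    then have "Q ((1 / norm x) *\<^sub>R x) \<le> Q v" using mx by blast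
    then have "Q x / (norm x)^2 \<le> Q v" unfolding Q_def Q_scale by (simp add: power_divide)
    then have "Q x \<le> Q v * (norm x)^2" using False by (simp add: divide_le_eq)
    then show ?thesis by (simp add: power2_norm_eq_inner)
  qed
  have ext2: "Q v * (x \<bullet> x) \<le> Q x" if vs: "v \<in> sphere 0 1" and mx: "\<forall>y\<in>sphere 0 1. Q v \<le> Q y" for v x
  proof (cases "x = 0")
    case True then show ?thesis by (simp add: Q_def)
  next
    case False
    have "(1 / norm x) *\<^sub>R x \<in> sphere 0 1" using False by simp
    then have "Q v \<le> Q ((1 / norm x) *\<^sub>R x)" using mx by blast
    then have "Q v \<le> Q x / (norm x)^2" unfolding Q_def Q_scale by (simp add: power_divide)
    then have "Q v * (norm x)^2 \<le> Q x" using False by (simp add: le_divide_eq)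
    then show ?thesis by (simp add: power2_norm_eq_inner)
  qed
  obtain v where "v \<in> sphere 0 1" "\<forall>y\<in>sphere 0 1. Q y \<le> Q v"
    using continuous_attains_sup[OF compact_sphere ne cont] by blast 
  then show "\<exists>v. v \<bullet> v = 1 \<and> (\<forall>x. (G *v x) \<bullet> (G *v x) \<le> ((G *v v) \<bullet> (G *v v)) * (x \<bullet> x))"
    using ext unfolding Q_def by (metis mem_sphere_0 norm_eq_1)
  obtain v where "v \<in> sphere 0 1" "\<forall>y\<in>sphere 0 1. Q v \<le> Q y"
    using continuous_attains_inf[OF compact_sphere ne cont] by blast
  then show "\<exists>v. v \<bullet> v = 1 \<and> (\<forall>x. ((G *v v) \<bullet> (G *v v)) * (x \<bullet> x) \<le> (G *v x) \<bullet> (G *v x))"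
    using ext2 unfolding Q_def by (metis mem_sphere_0 norm_eq_1)
qed


lemma eig_Q:
  fixes G :: "real^'n^'m"
  assumes "(transpose G ** G) *v v = l *\<^sub>R v"
  shows "(G *v v) \<bullet> (G *v v) = l * (v \<bullet> v)"
  using key_id[of v G v] assms by simp

lemma extr_eigen:
  fixes G :: "real^'n^'m"
  assumes v1: "v \<bullet> v = 1"
    and mx: "(\<forall>x. (G *v x) \<bullet> (G *v x) \<le> ((G *v v) \<bullet> (G *v v)) * (x \<bullet> x)) \<or>
             (\<forall>x. ((G *v v) \<bullet> (G *v v)) * (x \<bullet> x) \<le> (G *v x) \<bullet> (G *v x))"
  shows "(G *v v) \<bullet> (G *v v) \<in> eigenvalues_of (transpose G ** G)"
proof -
  define m where "m = (G *v v) \<bullet> (G *v v)"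
  define M where "M = transpose G ** G"
  have "m *\<^sub>R v - M *v v = 0"
  proof (cases "\<forall>x. (G *v x) \<bullet> (G *v x) \<le> m * (x \<bullet> x)")
    case True
    show ?thesis
    proof (rule psd_zero[where bf = "\<lambda>x y. m * (x \<bullet> y) - (G *v x) \<bullet> (G *v y)" and v = v])
      show "\<And>x. 0 \<le> m * (x \<bullet> x) - (G *v x) \<bullet> (G *v x)" using True by simp
      show "m * (v \<bullet> v) - (G *v v) \<bullet> (G *v v) = 0" using v1 m_def by simp
      show "\<And>w t. m * ((v + t *\<^sub>R w) \<bullet> (v + t *\<^sub>R w)) - (G *v (v + t *\<^sub>R w)) \<bullet> (G *v (v + t *\<^sub>R w)) =
         m * (v \<bullet> v) - (G *v v) \<bullet> (G *v v) + 2 * t * (m * (w \<bullet> v) - (G *v w) \<bullet> (G *v v)) +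
         t\<^sup>2 * (m * (w \<bullet> w) - (G *v w) \<bullet> (G *v w))"
        unfolding exp_lemma by (simp add: algebra_simps)
      show "\<And>w. m * (w \<bullet> v) - (G *v w) \<bullet> (G *v v) = w \<bullet> (m *\<^sub>R v - M *v v)"
        unfolding M_def by (simp add: inner_diff_right key_id)
    qed
  next
    case False
    then have F: "\<forall>x. m * (x \<bullet> x) \<le> (G *v x) \<bullet> (G *v x)" using mx m_def by blast
    have "M *v v - m *\<^sub>R v = 0"
    proof (rule psd_zero[where bf = "\<lambda>x y. (G *v x) \<bullet> (G *v y) - m * (x \<bullet> y)" and v = v])
      show "\<And>x. 0 \<le> (G *v x) \<bullet> (G *v x) - m * (x \<bullet> x)" using F by simp
      show "(G *v v) \<bullet> (G *v v) - m * (v \<bullet> v) = 0" using v1 m_def by simp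
      show "\<And>w t. (G *v (v + t *\<^sub>R w)) \<bullet> (G *v (v + t *\<^sub>R w)) - m * ((v + t *\<^sub>R w) \<bullet> (v + t *\<^sub>R w)) =
         (G *v v) \<bullet> (G *v v) - m * (v \<bullet> v) + 2 * t * ((G *v w) \<bullet> (G *v v) - m * (w \<bullet> v)) +
         t\<^sup>2 * ((G *v w) \<bullet> (G *v w) - m * (w \<bullet> w))"
        unfolding exp_lemma by (simp add: algebra_simps)
      show "\<And>w. (G *v w) \<bullet> (G *v v) - m * (w \<bullet> v) = w \<bullet> (M *v v - m *\<^sub>R v)"
        unfolding M_def by (simp add: inner_diff_right key_id)
    qed
    then show ?thesis by (simp add: algebra_simps)
  qed
  then have "M *v v = m *\<^sub>R v" by simp
  moreover have "v \<noteq> 0" using v1 by auto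
  ultimately show ?thesis unfolding eigenvalues_of_def M_def m_def by blast
qed

lemma eig_finite:
  fixes G :: "real^'n^'m"
  shows "finite (eigenvalues_of (transpose G ** G))"
proof -
  define E where "E = eigenvalues_of (transpose G ** G)"
  define ev where "ev l = (SOME v. v \<noteq> 0 \<and> (transpose G ** G) *v v = l *\<^sub>R v)" for l
  have evp: "ev l \<noteq> 0 \<and> (transpose G ** G) *v ev l = l *\<^sub>R ev l" if "l \<in> E" for l
  proof -
    from that obtain v where "v \<noteq> 0 \<and> (transpose G ** G) *v v = l *\<^sub>R v"
      unfolding E_def eigenvalues_of_def by blast
    then show ?thesis unfolding ev_def by (rule someI)
  qed
  have inj: "inj_on ev E"
  proof (rule inj_onI)
    fix a b assume a: "a \<in> E" and b: "b \<in> E" and e: "ev a = ev b"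
    have "a *\<^sub>R ev a = (transpose G ** G) *v ev a" using evp[OF a] by simp
    also have "\<dots> = b *\<^sub>R ev a" using evp[OF b] unfolding e by simp
    finally have "a *\<^sub>R ev a = b *\<^sub>R ev a" .
    then show "a = b" using evp[OF a] by simp
  qed
  have orth: "pairwise orthogonal (ev ` E)"
  proof (clarsimp simp: pairwise_def)
    fix a b assume a: "a \<in> E" and b: "b \<in> E" and ne: "ev a \<noteq> ev b"
    have ab: "a \<noteq> b" using ne by auto
    have "a * (ev b \<bullet> ev a) = ev b \<bullet> ((transpose G ** G) *v ev a)" using evp[OF a] by simp
    also have "\<dots> = ev a \<bullet> ((transpose G ** G) *v ev b)" by (simp only: key_id) (rule inner_commute)
    also have "\<dots> = b * (ev b \<bullet> ev a)" using evp[OF b] by (simp add: inner_commute)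
    finally have "(a - b) * (ev b \<bullet> ev a) = 0" by (simp add: algebra_simps)
    then show "orthogonal (ev a) (ev b)" using ab by (simp add: orthogonal_def inner_commute)
  qed
  have "0 \<notin> ev ` E" using evp by auto
  then have "independent (ev ` E)" using pairwise_orthogonal_independent orth by blast
  then have "finite (ev ` E)" using independent_imp_finite by blast
  then show ?thesis using finite_imageD inj E_def by blast
qed

lemma sigma_char:
  fixes G :: "real^'n^'m"
  obtains mu nu where "sigma_max G = sqrt mu" "sigma_min G = sqrt nu"
    "\<forall>x. (G *v x) \<bullet> (G *v x) \<le> mu * (x \<bullet> x)" "\<exists>v. v \<noteq> 0 \<and> (G *v v) \<bullet> (G *v v) = mu * (v \<bullet> v)"
    "\<forall>x. nu * (x \<bullet> x) \<le> (G *v x) \<bullet> (G *v x)" "\<exists>v. v \<noteq> 0 \<and> (G *v v) \<bullet> (G *v v) = nu * (v \<bullet> v)"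
proof -
  define E where "E = eigenvalues_of (transpose G ** G)"
  have fin: "finite E" using eig_finite E_def by blast
  obtain v where v1: "v \<bullet> v = 1" and mv: "\<forall>x. (G *v x) \<bullet> (G *v x) \<le> ((G *v v) \<bullet> (G *v v)) * (x \<bullet> x)"
    using ray_ext(1) by blast
  obtain w where w1: "w \<bullet> w = 1" and mw: "\<forall>x. ((G *v w) \<bullet> (G *v w)) * (x \<bullet> x) \<le> (G *v x) \<bullet> (G *v x)"
    using ray_ext(2) by blast
  define mu where "mu = (G *v v) \<bullet> (G *v v)"
  define nu where "nu = (G *v w) \<bullet> (G *v w)"
  have muE: "mu \<in> E" unfolding mu_def E_def by (rule extr_eigen[OF v1 disjI1[OF mv]])
  have nuE: "nu \<in> E" unfolding nu_def E_def by (rule extr_eigen[OF w1 disjI2[OF mw]])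
  have bnd: "nu \<le> l \<and> l \<le> mu" if "l \<in> E" for l
  proof -
    have "\<exists>x. x \<noteq> 0 \<and> (transpose G ** G) *v x = l *\<^sub>R x"
      using that unfolding E_def eigenvalues_of_def by simp
    then obtain x where x: "x \<noteq> 0" "(transpose G ** G) *v x = l *\<^sub>R x" by (elim exE conjE)
    have q: "(G *v x) \<bullet> (G *v x) = l * (x \<bullet> x)" using eig_Q[OF x(2)] .
    have xp: "x \<bullet> x > 0" using x(1) by (metis inner_gt_zero_iff)
    have "l * (x \<bullet> x) \<le> mu * (x \<bullet> x)" using mv[rule_format, of x] q unfolding mu_def by simp
    moreover have "nu * (x \<bullet> x) \<le> l * (x \<bullet> x)" using mw[rule_format, of x] q unfolding nu_def by simp
    ultimately show ?thesis using xp by simp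
  qed
  have smax: "sigma_max G = sqrt mu"
    unfolding sigma_max_def singular_values_def E_def[symmetric]
    using fin muE bnd by (intro Max_eqI) auto
  have smin: "sigma_min G = sqrt nu"
    unfolding sigma_min_def singular_values_def E_def[symmetric]
    using fin nuE bnd by (intro Min_eqI) auto
  show ?thesis
  proof (rule that[OF smax smin])
    show "\<forall>x. (G *v x) \<bullet> (G *v x) \<le> mu * (x \<bullet> x)" using mv mu_def by simp
    show "\<exists>v. v \<noteq> 0 \<and> (G *v v) \<bullet> (G *v v) = mu * (v \<bullet> v)" using v1 mu_def by (intro exI[of _ v]) auto
    show "\<forall>x. nu * (x \<bullet> x) \<le> (G *v x) \<bullet> (G *v x)" using mw nu_def by simp
    show "\<exists>v. v \<noteq> 0 \<and> (G *v v) \<bullet> (G *v v) = nu * (v \<bullet> v)" using w1 nu_def by (intro exI[of _ w]) auto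
  qed
qed



lemma kernel_rank:
  fixes A :: "real^'n^'m"
  shows "rank A = CARD('n) \<longleftrightarrow> (\<forall>x. A *v x = 0 \<longrightarrow> x = 0)"
proof -
  have "inj ((*v) A) \<longleftrightarrow> (\<forall>x. A *v x = 0 \<longrightarrow> x = 0)"
  proof
    assume "inj ((*v) A)" then show "\<forall>x. A *v x = 0 \<longrightarrow> x = 0"
      by (metis injD matrix_vector_mult_0_right)
  next
    assume h: "\<forall>x. A *v x = 0 \<longrightarrow> x = 0"
    show "inj ((*v) A)"
    proof (rule injI)
      fix x y assume "A *v x = A *v y"
      then have "A *v (x - y) = 0" by (simp add: matrix_vector_mult_diff_distrib)
      then have "x - y = 0" using h by blast
      then show "x = y" by simp
    qed
  qed
  then show ?thesis using full_rank_injective by blast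
qed

lemma cond_exp_B: "cond_exp_hY P h f = (Bmat P *v (\<chi> y. h y)) $ f"
  by (simp add: cond_exp_hY_def Bmat_def matrix_vector_mult_def mult.commute)

lemma completeness_B: "completeness P \<longleftrightarrow> (\<forall>x. Bmat P *v x = 0 \<longrightarrow> x = 0)"
proof
  assume c: "completeness P"
  show "\<forall>x. Bmat P *v x = 0 \<longrightarrow> x = 0"
  proof (intro allI impI)
    fix x assume "Bmat P *v x = 0"
    then have "\<forall>f. cond_exp_hY P (\<lambda>y. x $ y) f = 0" by (simp add: cond_exp_B)
    then have "\<forall>y. x $ y = 0" using c unfolding completeness_def by blast
    then show "x = 0" by (simp add: vec_eq_iff)
  qed
next
  assume k: "\<forall>x. Bmat P *v x = 0 \<longrightarrow> x = 0"
  show "completeness P" unfolding completeness_def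
  proof (intro allI impI)
    fix h :: "'b \<Rightarrow> real" and y assume "\<forall>f. cond_exp_hY P h f = 0"
    then have "Bmat P *v (\<chi> y. h y) = 0" by (simp add: cond_exp_B vec_eq_iff)
    then have "(\<chi> y. h y) = 0" using k by blast
    then show "h y = 0" by (metis vec_lambda_beta zero_index)
  qed
qed


lemma inner_sum: "(x::real^'n) \<bullet> y = (\<Sum>i\<in>UNIV. x $ i * y $ i)"
  by (simp add: inner_vec_def)

lemma part2:
  fixes P :: "('f::finite \<times> 'y::finite \<times> bool) pmf"
    and pi_lo pi_hi pF_lo pF_hi :: real
  assumes pos: "\<forall>f. pFR P f > 0"
    and ci: "cond_indep_FR_given_Y P"
    and pib: "\<forall>y. pi_lo \<le> piR P y \<and> piR P y \<le> pi_hi"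
    and pfb: "\<forall>f. pF_lo \<le> pFR P f \<and> pFR P f \<le> pF_hi"
    and pil: "pi_lo > 0" and pfl: "pF_lo > 0"
  shows "(completeness P \<longleftrightarrow> rank (Hmat P) = CARD('y))
             \<and> (completeness P \<longrightarrow>
                  cond_number (Bmat P) \<le> (pF_hi / pF_lo) * (pi_hi / pi_lo) * cond_number (Hmat P))"
proof -
  define B where "B = Bmat P"
  define H where "H = Hmat P"
  define pr where "pr y = piR P y" for y
  define pf where "pf f = pFR P f" for f
  define d where "d x = (\<chi> y. pr y * x $ y)" for x :: "real^'y"
  have prp: "pr y > 0" for y unfolding pr_def using pib pil by (meson less_le_trans)
  have pfp: "pf f > 0" for f using pos pf_def by simp
  have pYp: "pY P y > 0" for y
  proof -
    have "pY P y \<ge> 0" unfolding pY_def by simp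
    moreover have "pY P y \<noteq> 0" using prp[of y] unfolding pr_def piR_def by auto
    ultimately show ?thesis by simp
  qed
  have fyr: "pFYR P f y True = pFY P f y * pr y" for f y
  proof -
    have "pFYR P f y True * pY P y = pFY P f y * pYR P y True" using ci unfolding cond_indep_FR_given_Y_def by blast
    then show ?thesis using pYp[of y] unfolding pr_def piR_def by (simp add: field_simps)
  qed
  have Bv: "(B *v x) $ f = (H *v d x) $ f / pf f" for x f
    unfolding B_def H_def d_def Bmat_def Hmat_def matrix_vector_mult_def pf_def
    by (simp add: fyr sum_divide_distrib mult.assoc mult.commute mult.left_commute)
  have dz: "d x = 0 \<longleftrightarrow> x = 0" for x
    using prp by (auto simp: d_def vec_eq_iff) (metis less_irrefl)
  have dsurj: "d (\<chi> y. z $ y / pr y) = z" for z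
    using prp by (simp add: d_def vec_eq_iff) (metis less_irrefl)
  have Bz: "B *v x = 0 \<longleftrightarrow> H *v d x = 0" for x
    using pfp by (auto simp: vec_eq_iff Bv) (metis less_irrefl)
  have kerBH: "(\<forall>x. B *v x = 0 \<longrightarrow> x = 0) \<longleftrightarrow> (\<forall>x. H *v x = 0 \<longrightarrow> x = 0)"
    by (metis Bz dz dsurj)
  have c_iff: "completeness P \<longleftrightarrow> (\<forall>x. H *v x = 0 \<longrightarrow> x = 0)"
    using completeness_B kerBH B_def by metis
  have pfhi: "pF_hi > 0" using pfb pfl by (meson less_le_trans)
  have pihi: "pi_hi > 0" using pib pil by (meson less_le_trans)
  define QB where "QB x = (B *v x) \<bullet> (B *v x)" for x
  define QH where "QH x = (H *v x) \<bullet> (H *v x)" for x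
  have QB_eq: "QB x = (\<Sum>f\<in>UNIV. ((H *v d x) $ f)^2 / (pf f)^2)" for x
    unfolding QB_def inner_sum Bv by (simp add: power2_eq_square)
  have QBup: "QB x \<le> QH (d x) / pF_lo^2" for x
  proof -
    have "QB x \<le> (\<Sum>f\<in>UNIV. ((H *v d x) $ f)^2 / pF_lo^2)"
      unfolding QB_eq
    proof (rule sum_mono)
      fix f
      have "pF_lo^2 \<le> (pf f)^2" using pfb pfl pf_def by (simp add: power_mono)
      then show "((H *v d x) $ f)^2 / (pf f)^2 \<le> ((H *v d x) $ f)^2 / pF_lo^2"
        using pfl pfp[of f] by (intro divide_left_mono) auto
    qed
    also have "\<dots> = QH (d x) / pF_lo^2"
      unfolding QH_def inner_sum by (simp add: power2_eq_square sum_divide_distrib)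
    finally show ?thesis .
  qed
  have QBlo: "QH (d x) / pF_hi^2 \<le> QB x" for x
  proof -
    have "QH (d x) / pF_hi^2 = (\<Sum>f\<in>UNIV. ((H *v d x) $ f)^2 / pF_hi^2)"
      unfolding QH_def inner_sum by (simp add: power2_eq_square sum_divide_distrib)
    also have "\<dots> \<le> QB x"
      unfolding QB_eq
    proof (rule sum_mono)
      fix f
      have "(pf f)^2 \<le> pF_hi^2" using pfb pfp pf_def by (simp add: power_mono less_imp_le)
      then show "((H *v d x) $ f)^2 / pF_hi^2 \<le> ((H *v d x) $ f)^2 / (pf f)^2"
        using pfp[of f] pfhi by (intro divide_left_mono) auto
    qed
    finally show ?thesis .
  qed
  have dup: "d x \<bullet> d x \<le> pi_hi^2 * (x \<bullet> x)" for x
  proof -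
    have "d x \<bullet> d x = (\<Sum>y\<in>UNIV. (pr y)^2 * (x $ y)^2)"
      unfolding inner_sum d_def by (simp add: power2_eq_square algebra_simps)
    also have "\<dots> \<le> (\<Sum>y\<in>UNIV. pi_hi^2 * (x $ y)^2)"
    proof (rule sum_mono)
      fix y
      have "(pr y)^2 \<le> pi_hi^2" using pib prp pr_def by (simp add: power_mono less_imp_le)
      then show "(pr y)^2 * (x $ y)^2 \<le> pi_hi^2 * (x $ y)^2" by (simp add: mult_right_mono)
    qed
    also have "\<dots> = pi_hi^2 * (x \<bullet> x)"
      unfolding inner_sum by (simp add: power2_eq_square sum_distrib_left)
    finally show ?thesis .
  qed
  have dlo: "pi_lo^2 * (x \<bullet> x) \<le> d x \<bullet> d x" for x
  proof -
    have "pi_lo^2 * (x \<bullet> x) = (\<Sum>y\<in>UNIV. pi_lo^2 * (x $ y)^2)"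
      unfolding inner_sum by (simp add: power2_eq_square sum_distrib_left)
    also have "\<dots> \<le> (\<Sum>y\<in>UNIV. (pr y)^2 * (x $ y)^2)"
    proof (rule sum_mono)
      fix y
      have "pi_lo^2 \<le> (pr y)^2" using pib pil pr_def by (simp add: power_mono)
      then show "pi_lo^2 * (x $ y)^2 \<le> (pr y)^2 * (x $ y)^2" by (simp add: mult_right_mono)
    qed
    also have "\<dots> = d x \<bullet> d x"
      unfolding inner_sum d_def by (simp add: power2_eq_square algebra_simps)
    finally show ?thesis .
  qed
  have bound: "cond_number B \<le> (pF_hi / pF_lo) * (pi_hi / pi_lo) * cond_number H"
    if full: "\<forall>x. H *v x = 0 \<longrightarrow> x = 0"
  proof -
    obtain muB nuB where sB: "sigma_max B = sqrt muB" "sigma_min B = sqrt nuB"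
      "\<exists>v. v \<noteq> 0 \<and> QB v = muB * (v \<bullet> v)" "\<exists>v. v \<noteq> 0 \<and> QB v = nuB * (v \<bullet> v)"
      unfolding QB_def by (rule sigma_char[of B]) blast+
    obtain muH nuH where sH: "sigma_max H = sqrt muH" "sigma_min H = sqrt nuH"
      "\<forall>x. QH x \<le> muH * (x \<bullet> x)" "\<forall>x. nuH * (x \<bullet> x) \<le> QH x"
      "\<exists>v. v \<noteq> 0 \<and> QH v = nuH * (v \<bullet> v)"
      unfolding QH_def by (rule sigma_char[of H]) blast+
    have nuHp: "nuH > 0"
    proof -
      obtain v where v: "v \<noteq> 0" "QH v = nuH * (v \<bullet> v)" using sH(5) by blast
      have "H *v v \<noteq> 0" using full v(1) by blast
      then have "QH v > 0" unfolding QH_def by simp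
      moreover have "v \<bullet> v > 0" using v(1) by simp
      ultimately show ?thesis using v(2) by (simp add: zero_less_mult_iff)
    qed
    have muHn: "muH \<ge> 0"
    proof -
      obtain v where v: "v \<noteq> 0" "QH v = nuH * (v \<bullet> v)" using sH(5) by blast
      have "QH v \<le> muH * (v \<bullet> v)" using sH(3) by blast
      moreover have "QH v \<ge> 0" unfolding QH_def by simp
      moreover have "v \<bullet> v > 0" using v(1) by simp
      ultimately show ?thesis by (metis le_less_trans not_le mult_neg_pos order.strict_iff_not)
    qed
    have muB: "muB \<le> muH * pi_hi^2 / pF_lo^2"
    proof -
      obtain v where v: "v \<noteq> 0" "QB v = muB * (v \<bullet> v)" using sB(3) by blast
      have vp: "v \<bullet> v > 0" using v(1) by simp
      have "muB * (v \<bullet> v) \<le> QH (d v) / pF_lo^2" using QBup v(2) by metis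
      also have "\<dots> \<le> muH * (d v \<bullet> d v) / pF_lo^2"
        using sH(3) pfl by (simp add: divide_right_mono)
      also have "\<dots> \<le> muH * (pi_hi^2 * (v \<bullet> v)) / pF_lo^2"
        using dup[of v] muHn pfl by (simp add: divide_right_mono mult_left_mono)
      finally have "muB * (v \<bullet> v) \<le> (muH * pi_hi^2 / pF_lo^2) * (v \<bullet> v)" by (simp add: algebra_simps)
      then show ?thesis using vp by (metis mult_le_cancel_right_pos)
    qed
    have nuB: "nuH * pi_lo^2 / pF_hi^2 \<le> nuB"
    proof -
      obtain v where v: "v \<noteq> 0" "QB v = nuB * (v \<bullet> v)" using sB(4) by blast
      have vp: "v \<bullet> v > 0" using v(1) by simp
      have "(nuH * pi_lo^2 / pF_hi^2) * (v \<bullet> v) = nuH * (pi_lo^2 * (v \<bullet> v)) / pF_hi^2"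
        by (simp add: algebra_simps)
      also have "\<dots> \<le> nuH * (d v \<bullet> d v) / pF_hi^2"
        using dlo[of v] nuHp pfhi by (simp add: divide_right_mono mult_left_mono)
      also have "\<dots> \<le> QH (d v) / pF_hi^2"
        using sH(4) pfhi by (simp add: divide_right_mono)
      also have "\<dots> \<le> nuB * (v \<bullet> v)" using QBlo v(2) by metis
      finally show ?thesis using vp by (metis mult_le_cancel_right_pos)
    qed
    have sBmax: "sigma_max B \<le> sqrt muH * (pi_hi / pF_lo)"
    proof -
      have "sigma_max B \<le> sqrt (muH * pi_hi^2 / pF_lo^2)" using sB(1) muB by simp
      also have "\<dots> = sqrt muH * (pi_hi / pF_lo)"
        using pihi pfl by (simp add: real_sqrt_mult real_sqrt_divide)
      finally show ?thesis .
    qed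
    have sBmin: "sqrt nuH * (pi_lo / pF_hi) \<le> sigma_min B"
    proof -
      have "sqrt nuH * (pi_lo / pF_hi) = sqrt (nuH * pi_lo^2 / pF_hi^2)"
        using pil pfhi by (simp add: real_sqrt_mult real_sqrt_divide)
      also have "\<dots> \<le> sigma_min B" using sB(2) nuB by simp
      finally show ?thesis .
    qed
    have snH: "sqrt nuH > 0" using nuHp by simp
    have lowp: "sqrt nuH * (pi_lo / pF_hi) > 0" using snH pil pfhi by simp
    have "cond_number B = sigma_max B / sigma_min B" by (simp add: cond_number_def)
    also have "\<dots> \<le> (sqrt muH * (pi_hi / pF_lo)) / (sqrt nuH * (pi_lo / pF_hi))"
      using sBmax sBmin lowp muHn pihi pfl by (intro frac_le) auto
    also have "\<dots> = (pF_hi / pF_lo) * (pi_hi / pi_lo) * (sqrt muH / sqrt nuH)"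
      using snH pil pfhi pfl by (simp add: field_simps)
    also have "\<dots> = (pF_hi / pF_lo) * (pi_hi / pi_lo) * cond_number H"
      by (simp add: cond_number_def sH(1,2))
    finally show ?thesis .
  qed
  show ?thesis using c_iff kernel_rank[of H] bound B_def H_def by auto
qed


theorem proposition3:
  fixes P :: "('f::finite \<times> 'y::finite \<times> bool) pmf"
    and pi_lo pi_hi pF_lo pF_hi :: real
  assumes pos: "\<forall>f. pFR P f > 0"
  shows "(completeness P \<longleftrightarrow> rank (Bmat P) = CARD('y))
     \<and> ((cond_indep_FR_given_Y P
          \<and> (\<forall>y. pi_lo \<le> piR P y \<and> piR P y \<le> pi_hi)
          \<and> (\<forall>f. pF_lo \<le> pFR P f \<and> pFR P f \<le> pF_hi)
          \<and> pi_lo > 0 \<and> pF_lo > 0)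
        \<longrightarrow> ((completeness P \<longleftrightarrow> rank (Hmat P) = CARD('y))
             \<and> (completeness P \<longrightarrow>
                  cond_number (Bmat P) \<le> (pF_hi / pF_lo) * (pi_hi / pi_lo) * cond_number (Hmat P))))"
  using completeness_B[of P] kernel_rank[of "Bmat P"] part2[OF pos] by blast

end
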